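(* For every $C$-pseudo-cone $E$ and every $r\in(-\infty,0)\cup(0,1)$, the $r$-th dual volume $\widetilde{V}_r(E)=\frac{1}{n}\int_{\Omega_C}\rho_E(u)^r\,du$ is finite.
   Context: $C\subset\mathbb{R}^n$ ($n\ge2$) is a pointed closed convex cone with nonempty interior; $\Omega_C=\mathbb{S}^{n-1}\cap\operatorname{int}C$, with spherical Lebesgue measure $du$. A $C$-pseudo-cone is a nonempty closed convex set $E$ with $o\notin E$, $\lambda x\in E$ for all $x\in E,\lambda\ge1$, and recession cone equal to $C$. $\rho_E(u)=\min\{r>0:ru\in E\}$. *)

theory Defs
  imports "HOL-Analysis.Analysis"
begin

definition pointed_cc_cone :: "'a::euclidean_space set \<Rightarrow> bool" where
  "pointed_cc_cone C \<longleftrightarrow> C \<noteq> {} \<and> cone C \<and> convex C \<and> closed C \<and>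
     C \<inter> uminus ` C = {0} \<and> interior C \<noteq> {}"

definition rec_cone :: "'a::euclidean_space set \<Rightarrow> 'a set" where
  "rec_cone E = {y. \<forall>x\<in>E. \<forall>t::real. t \<ge> 0 \<longrightarrow> x + t *\<^sub>R y \<in> E}"

definition C_pseudo_cone :: "'a::euclidean_space set \<Rightarrow> 'a set \<Rightarrow> bool" where
  "C_pseudo_cone C E \<longleftrightarrow> E \<noteq> {} \<and> closed E \<and> convex E \<and> 0 \<notin> E \<and>
     (\<forall>x\<in>E. \<forall>l::real. l \<ge> 1 \<longrightarrow> l *\<^sub>R x \<in> E) \<and> rec_cone E = C"

definition Omega :: "'a::euclidean_space set \<Rightarrow> 'a set" where
  "Omega C = sphere 0 1 \<inter> interior C"

definition radial :: "'a::euclidean_space set \<Rightarrow> 'a \<Rightarrow> real" where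
  "radial E u = Inf {r. r > 0 \<and> r *\<^sub>R u \<in> E}"

text \<open>Spherical Lebesgue measure (surface area measure on the unit sphere), realised as
  the cone-measure construction: sigma(A) = n * lambda({t x. x \<in> A, 0 < t \<le> 1}),
  i.e. n times the push-forward of Lebesgue measure on the unit ball under x \<mapsto> x/|x|.
  (The point 0 is a Lebesgue null set, so the measure is concentrated on the sphere.)\<close>
definition sphere_measure :: "'a::euclidean_space measure" where
  "sphere_measure = density
     (distr (restrict_space lborel (ball 0 1)) borel (\<lambda>x. x /\<^sub>R norm x))
     (\<lambda>_. ennreal (real DIM('a)))"

definition dual_volume :: "'a::euclidean_space set \<Rightarrow> real \<Rightarrow> 'a set \<Rightarrow> ennreal" where
  "dual_volume C r E = ennreal (1 / real DIM('a)) *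
     (\<integral>\<^sup>+ u\<in>Omega C. ennreal (radial E u powr r) \<partial>sphere_measure)"

end

theory Submission
  imports Defs
begin

lemma lborel_transl:
  fixes A :: "'a::euclidean_space set"
  assumes "A \<in> sets borel"
  shows "emeasure lborel ((\<lambda>x. t + x) -` A) = emeasure lborel A"
proof -
  have m: "(\<lambda>x::'a. t + 1 *\<^sub>R x) \<in> borel_measurable borel" by measurable
  have "emeasure lborel A = emeasure (density (distr lborel borel (\<lambda>x::'a. t + 1 *\<^sub>R x)) (\<lambda>_. \<bar>1::real\<bar>^DIM('a))) A"
    using lborel_affine[of 1 t] by simp
  also have "\<dots> = emeasure (distr lborel borel (\<lambda>x::'a. t + 1 *\<^sub>R x)) A"
    using assms by (simp add: emeasure_density_const)
  also have "\<dots> = emeasure lborel ((\<lambda>x. t + x) -` A)"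
    using assms m by (subst emeasure_distr) auto
  finally show ?thesis by simp
qed

lemma cone_add:
  assumes "cone C" "convex C" "x \<in> C" "y \<in> C"
  shows "x + y \<in> C"
proof -
  have "(1/2) *\<^sub>R x + (1/2) *\<^sub>R y \<in> C" using assms(2-4) by (intro convexD) auto
  then have "2 *\<^sub>R ((1/2) *\<^sub>R x + (1/2) *\<^sub>R y) \<in> C" using assms(1) by (auto simp: cone_def)
  then show ?thesis by (simp add: scaleR_add_right)
qed

lemma cone_scale: "cone C \<Longrightarrow> x \<in> C \<Longrightarrow> (a::real) \<ge> 0 \<Longrightarrow> a *\<^sub>R x \<in> C"
  by (auto simp: cone_def)

lemma D_borel:
  fixes C :: "'a::euclidean_space set"
  assumes "closed C"
  shows "{x \<in> ball 0 1 \<inter> C. x - a \<notin> C} \<in> sets borel"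
proof -
  have "{x. x - a \<notin> C} = (\<lambda>x. a + x) ` (- C)"
  proof (intro set_eqI iffI)
    fix x assume "x \<in> {x. x - a \<notin> C}"
    then show "x \<in> (\<lambda>x. a + x) ` (- C)" by (intro image_eqI[of _ _ "x - a"]) auto
  next
    fix x assume "x \<in> (\<lambda>x. a + x) ` (- C)"
    then show "x \<in> {x. x - a \<notin> C}" by auto
  qed
  then have o: "open {x. x - a \<notin> C}" using assms open_translation by (metis open_Compl)
  have "{x \<in> ball 0 1 \<inter> C. x - a \<notin> C} = ball 0 1 \<inter> C \<inter> {x. x - a \<notin> C}" by auto
  then show ?thesis using o assms by (auto intro!: sets.Int borel_open borel_closed)
qed

lemma D_bound:
  fixes C :: "'a::euclidean_space set" and e :: 'a
  assumes cC: "cone C" "convex C" "closed C" and e: "e \<in> C" and h: "h > 0" and Nh: "real N * h \<le> 1"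
  shows "of_nat N * emeasure lborel {x \<in> ball 0 1 \<inter> C. x - h *\<^sub>R e \<notin> C} \<le> emeasure lborel (ball (0::'a) (1 + norm e))"
proof -
  define D where "D = {x \<in> ball 0 1 \<inter> C. x - h *\<^sub>R e \<notin> C}"
  have Db: "D \<in> sets borel" unfolding D_def using D_borel[OF cC(3)] .
  define T where "T i = (\<lambda>x. (- (real i * h) *\<^sub>R e) + x) -` D" for i :: nat
  have Tb: "T i \<in> sets borel" for i
  proof -
    have "(\<lambda>x::'a. (- (real i * h) *\<^sub>R e) + x) \<in> borel_measurable borel" by measurable
    from measurable_sets[OF this Db] show ?thesis unfolding T_def by (simp only: space_borel Int_UNIV_right)
  qed
  have Tm: "emeasure lborel (T i) = emeasure lborel D" for i
    unfolding T_def using lborel_transl[OF Db] by blast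
  have disj: "disjoint_family_on T {..<N}"
    unfolding disjoint_family_on_def
  proof (intro ballI impI)
    fix i j assume ij: "i \<in> {..<N}" "j \<in> {..<N}" "i \<noteq> j"
    have "False" if "y \<in> T i" "y \<in> T j" "i < j" for i j y
    proof -
      have a: "y - (real j * h) *\<^sub>R e \<in> C" using that(2) by (auto simp: T_def D_def)
      have b: "y - (real i * h) *\<^sub>R e - h *\<^sub>R e \<notin> C" using that(1) by (auto simp: T_def D_def)
      have "(real j - real i - 1) * h \<ge> 0" using that(3) h by auto
      then have "((real j - real i - 1) * h) *\<^sub>R e \<in> C" using cone_scale[OF cC(1) e] by blast
      then have "(y - (real j * h) *\<^sub>R e) + ((real j - real i - 1) * h) *\<^sub>R e \<in> C"
        using cone_add[OF cC(1,2) a] by blast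
      moreover have "(y - (real j * h) *\<^sub>R e) + ((real j - real i - 1) * h) *\<^sub>R e = y - (real i * h) *\<^sub>R e - h *\<^sub>R e"
        by (simp add: algebra_simps)
      ultimately show False using b by simp
    qed
    then show "T i \<inter> T j = {}" using ij by (metis disjoint_iff linorder_neqE_nat)
  qed
  have sub: "(\<Union>i\<in>{..<N}. T i) \<subseteq> ball 0 (1 + norm e)"
  proof
    fix y assume "y \<in> (\<Union>i\<in>{..<N}. T i)"
    then obtain i where i: "i < N" "y \<in> T i" by auto
    then have y1: "norm (y - (real i * h) *\<^sub>R e) < 1" by (auto simp: T_def D_def)
    have "real i * h \<le> 1" using i(1) Nh h by (smt (verit) mult_right_mono of_nat_less_iff)
    then have "norm ((real i * h) *\<^sub>R e) \<le> norm e" using h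
      by (simp add: mult_left_le_one_le)
    then have "norm y < 1 + norm e" using y1 norm_triangle_sub[of y "(real i * h) *\<^sub>R e"] by linarith
    then show "y \<in> ball 0 (1 + norm e)" by simp
  qed
  have "of_nat N * emeasure lborel D = (\<Sum>i\<in>{..<N}. emeasure lborel (T i))" by (simp add: Tm)
  also have "\<dots> = emeasure lborel (\<Union>i\<in>{..<N}. T i)"
    using Tb disj by (intro sum_emeasure) auto
  also have "\<dots> \<le> emeasure lborel (ball (0::'a) (1 + norm e))"
    using sub by (intro emeasure_mono) auto
  finally show ?thesis unfolding D_def .
qed

lemma sets_sigma: "sets (sphere_measure :: 'a::euclidean_space measure) = sets borel"
  unfolding sphere_measure_def by simp

lemma phi_meas: "(\<lambda>x::'a::euclidean_space. x /\<^sub>R norm x) \<in> measurable (restrict_space lborel (ball 0 1)) borel"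
  by (intro measurable_restrict_space1) measurable

lemma emeasure_sigma:
  assumes "A \<in> sets borel"
  shows "emeasure (sphere_measure :: 'a::euclidean_space measure) A
     = ennreal (real DIM('a)) * emeasure lborel ((\<lambda>x::'a. x /\<^sub>R norm x) -` A \<inter> ball 0 1)"
proof -
  have "emeasure (sphere_measure :: 'a measure) A = ennreal (real DIM('a)) *
      emeasure (distr (restrict_space lborel (ball (0::'a) 1)) borel (\<lambda>x. x /\<^sub>R norm x)) A"
    unfolding sphere_measure_def using assms by (simp add: emeasure_density_const)
  also have "emeasure (distr (restrict_space lborel (ball (0::'a) 1)) borel (\<lambda>x. x /\<^sub>R norm x)) A
      = emeasure (restrict_space lborel (ball (0::'a) 1)) ((\<lambda>x::'a. x /\<^sub>R norm x) -` A \<inter> ball 0 1)"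
    by (subst emeasure_distr[OF phi_meas assms]) (simp add: space_restrict_space)
  also have "\<dots> = emeasure lborel ((\<lambda>x::'a. x /\<^sub>R norm x) -` A \<inter> ball 0 1)"
    by (rule emeasure_restrict_space) auto
  finally show ?thesis .
qed

lemma sigma_fin:
  assumes "A \<in> sets borel"
  shows "emeasure (sphere_measure :: 'a::euclidean_space measure) A < \<infinity>"
proof -
  have "emeasure lborel ((\<lambda>x::'a. x /\<^sub>R norm x) -` A \<inter> ball 0 1) \<le> emeasure lborel (ball (0::'a) 1)"
    by (rule emeasure_mono) auto
  also have "\<dots> < \<infinity>" by (rule emeasure_lborel_ball_finite)
  finally show ?thesis using emeasure_sigma[OF assms]
    by (simp add: ennreal_mult_less_top)
qed

lemma D_bound_real:
  fixes C :: "'a::euclidean_space set" and e :: 'a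
  assumes cC: "cone C" "convex C" "closed C" and e: "e \<in> C" and h: "h > 0" and Nh: "real N * h \<le> 1" and N0: "N > 0"
  shows "emeasure lborel {x \<in> ball 0 1 \<inter> C. x - h *\<^sub>R e \<notin> C}
     \<le> ennreal (measure lborel (ball (0::'a) (1 + norm e)) / real N)"
proof -
  have False: "N \<noteq> 0" using N0 by simp
  define D where "D = {x \<in> ball 0 1 \<inter> C. x - h *\<^sub>R e \<notin> C}"
  have fD: "emeasure lborel D \<noteq> \<infinity>"
  proof -
    have "emeasure lborel D \<le> emeasure lborel (ball (0::'a) 1)" by (rule emeasure_mono) (auto simp: D_def)
    then show ?thesis using emeasure_lborel_ball_finite[of "0::'a" 1] by (auto simp: top_unique)
  qed
  have eD: "emeasure lborel D = ennreal (measure lborel D)" using fD by (simp add: emeasure_eq_ennreal_measure)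
  have eB: "emeasure lborel (ball (0::'a) (1 + norm e)) = ennreal (measure lborel (ball (0::'a) (1 + norm e)))"
    by (rule emeasure_eq_ennreal_measure) (use emeasure_lborel_ball_finite in \<open>simp add: less_top\<close>)
  have "of_nat N * emeasure lborel D \<le> emeasure lborel (ball (0::'a) (1 + norm e))"
    using D_bound[OF cC e h Nh] unfolding D_def .
  then have "ennreal (real N * measure lborel D) \<le> ennreal (measure lborel (ball (0::'a) (1 + norm e)))"
    unfolding eD eB by (simp add: ennreal_mult ennreal_of_nat_eq_real_of_nat)
  then have "real N * measure lborel D \<le> measure lborel (ball (0::'a) (1 + norm e))"
    by (simp add: ennreal_le_iff)
  then have "measure lborel D \<le> measure lborel (ball (0::'a) (1 + norm e)) / real N"
    using False by (simp add: field_simps)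
  then show ?thesis unfolding D_def[symmetric] eD by (simp add: ennreal_leI)
qed

lemma W_borel:
  fixes C :: "'a::euclidean_space set"
  assumes "closed C"
  shows "{x. x - a \<notin> C} \<in> sets borel"
proof -
  have "{x. x - a \<notin> C} = (\<lambda>x. a + x) ` (- C)"
  proof (intro set_eqI iffI)
    fix x assume "x \<in> {x. x - a \<notin> C}"
    then show "x \<in> (\<lambda>x. a + x) ` (- C)" by (intro image_eqI[of _ _ "x - a"]) auto
  next
    fix x assume "x \<in> (\<lambda>x. a + x) ` (- C)"
    then show "x \<in> {x. x - a \<notin> C}" by auto
  qed
  then have o: "open {x. x - a \<notin> C}" using assms open_translation by (metis open_Compl)
  then show ?thesis by auto
qed

lemma geo_identity:
  fixes c r :: real assumes "c > 0"
  shows "(c * 2 ^ Suc k) powr r / 2 ^ k = c powr r * 2 powr r * (2 powr (r - 1)) ^ k"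
proof -
  have a: "(c * 2 ^ Suc k) powr r = c powr r * (2 ^ Suc k) powr r" by (simp add: powr_mult)
  have b: "((2::real) ^ Suc k) powr r = 2 powr (real (Suc k) * r)"
    by (metis powr_powr powr_realpow zero_less_numeral)
  have c: "(2::real) ^ k = 2 powr real k" by (simp add: powr_realpow)
  have d: "((2::real) powr (r - 1)) ^ k = 2 powr (real k * (r - 1))" by (simp add: powr_power)
  have "(2::real) powr (real (Suc k) * r) / 2 powr real k = 2 powr r * 2 powr (real k * (r - 1))"
    by (simp add: powr_add[symmetric] powr_diff[symmetric] algebra_simps)
  then show ?thesis unfolding a b c d by (metis (no_types) mult.assoc times_divide_eq_right)
qed

theorem corollary5p1:
  fixes C E :: "'a::euclidean_space set" and r :: real
  assumes "DIM('a) \<ge> 2"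
    and "pointed_cc_cone C"
    and "C_pseudo_cone C E"
    and "r < 0 \<or> (0 < r \<and> r < 1)"
  shows "dual_volume C r E < \<infinity>"
proof -
  have cC: "cone C" "convex C" "closed C" "interior C \<noteq> {}" using assms(2) by (auto simp: pointed_cc_cone_def)
  have E: "E \<noteq> {}" "closed E" "0 \<notin> E" "rec_cone E = C" using assms(3) by (auto simp: C_pseudo_cone_def)
  obtain p where p: "p \<in> E" using E by auto
  have recE: "p + y \<in> E" if "y \<in> C" for y
  proof -
    have "y \<in> rec_cone E" using that E(4) by simp
    then have all: "\<forall>x\<in>E. \<forall>t::real. t \<ge> 0 \<longrightarrow> x + t *\<^sub>R y \<in> E" unfolding rec_cone_def by simp
    have "p + (1::real) *\<^sub>R y \<in> E" using all[rule_format, OF p, of 1] by simp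
    then show ?thesis by simp
  qed
  have Ob: "Omega C \<in> sets borel" unfolding Omega_def by (intro sets.Int borel_closed borel_open) auto
  have Os: "Omega C \<in> sets sphere_measure" using Ob sets_sigma by blast
  obtain e where "e \<in> interior C" using cC(4) by auto
  then obtain \<epsilon> where eps: "\<epsilon> > 0" "ball e \<epsilon> \<subseteq> C" by (auto simp: mem_interior)
  have eC: "e \<in> C" using eps by auto
  define c where "c = (norm p + 1) / \<epsilon>"
  have c0: "c > 0" unfolding c_def using eps by (intro divide_pos_pos add_nonneg_pos) auto
  have cep: "c *\<^sub>R e - p \<in> C"
  proof -
    have "norm ((1/c) *\<^sub>R p) < \<epsilon>" using eps c0 by (simp add: c_def field_simps)
    then have "e - (1/c) *\<^sub>R p \<in> ball e \<epsilon>" by (simp add: dist_norm)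
    then have "e - (1/c) *\<^sub>R p \<in> C" using eps by auto
    then have "c *\<^sub>R (e - (1/c) *\<^sub>R p) \<in> C" using cone_scale[OF cC(1)] c0 by auto
    then show ?thesis using c0 by (simp add: algebra_simps)
  qed
  define S where "S u = {t. t > 0 \<and> t *\<^sub>R u \<in> E}" for u
  have rad: "radial E u = Inf (S u)" for u by (simp add: radial_def S_def)
  have K1: "c / h \<in> S u" if "h > 0" "u - h *\<^sub>R e \<in> C" for u h
  proof -
    have "(c / h) *\<^sub>R u - p = (c / h) *\<^sub>R (u - h *\<^sub>R e) + (c *\<^sub>R e - p)"
      using that(1) by (simp add: algebra_simps)
    also have "\<dots> \<in> C" using that c0 cep by (intro cone_add[OF cC(1,2)] cone_scale[OF cC(1)]) auto
    finally have "p + ((c / h) *\<^sub>R u - p) \<in> E" by (rule recE)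
    then show ?thesis using that c0 by (simp add: S_def)
  qed
  have bdd: "bdd_below (S u)" for u by (rule bdd_belowI[of _ 0]) (auto simp: S_def)
  have K1': "radial E u \<le> c / h" if "h > 0" "u - h *\<^sub>R e \<in> C" for u h
    unfolding rad using K1[OF that] bdd by (rule cInf_lower)
  have K2: "\<exists>h>0. u - h *\<^sub>R e \<in> C" if "u \<in> Omega C" for u
  proof -
    from that have "u \<in> interior C" by (simp add: Omega_def)
    then obtain \<delta> where d: "\<delta> > 0" "ball u \<delta> \<subseteq> C" by (auto simp: mem_interior)
    define h where "h = \<delta> / (norm e + 1)"
    have h0: "h > 0" unfolding h_def using d by (intro divide_pos_pos add_nonneg_pos) auto
    have "norm (h *\<^sub>R e) = h * norm e" using h0 by simp
    also have "\<dots> = \<delta> * (norm e / (norm e + 1))" by (simp add: h_def)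
    also have "\<dots> < \<delta> * 1"
    proof (intro mult_strict_left_mono)
      have "norm e + 1 > 0" by (intro add_nonneg_pos) auto
      then show "norm e / (norm e + 1) < 1" by (simp add: divide_less_eq)
    qed (use d in auto)
    also have "\<dots> = \<delta>" by simp
    finally have "u - h *\<^sub>R e \<in> ball u \<delta>" by (simp add: dist_norm)
    then have "u - h *\<^sub>R e \<in> C" using d(2) by blast
    then show ?thesis using h0 by blast
  qed
  have Sne: "S u \<noteq> {}" if "u \<in> Omega C" for u using K2[OF that] K1 by blast
  have rad0: "radial E u \<ge> 0" if "u \<in> Omega C" for u
    unfolding rad using Sne[OF that] by (rule cInf_greatest) (auto simp: S_def)
  define I where "I = (\<integral>\<^sup>+ u\<in>Omega C. ennreal (radial E u powr r) \<partial>(sphere_measure :: 'a measure))"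
  have "I < \<infinity>"
  proof (cases "r < 0")
    case True
    have "open (- E)" using E(2) by auto
    then obtain d where d: "d > 0" "ball 0 d \<subseteq> - E" using E(3) open_contains_ball_eq by blast
    have dle: "d \<le> radial E u" if "u \<in> Omega C" for u
      unfolding rad using Sne[OF that]
    proof (rule cInf_greatest)
      fix t assume "t \<in> S u"
      then have "t > 0" "t *\<^sub>R u \<in> E" by (auto simp: S_def)
      moreover have "norm u = 1" using that by (simp add: Omega_def)
      ultimately show "d \<le> t" using d by (force simp: subset_iff)
    qed
    have "I \<le> (\<integral>\<^sup>+ u. ennreal (d powr r) * indicator (Omega C) u \<partial>(sphere_measure :: 'a measure))"
      unfolding I_def
    proof (rule nn_integral_mono)
      fix u show "ennreal (radial E u powr r) * indicator (Omega C) u \<le> ennreal (d powr r) * indicator (Omega C) u"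
      proof (cases "u \<in> Omega C")
        case True
        then have "radial E u powr r \<le> d powr r" using powr_mono2'[of r d "radial E u"] \<open>r < 0\<close> d dle by auto
        then show ?thesis using True by (simp add: ennreal_leI)
      qed simp
    qed
    also have "\<dots> = ennreal (d powr r) * emeasure sphere_measure (Omega C)"
      using Os by (rule nn_integral_cmult_indicator)
    also have "\<dots> < \<infinity>" using sigma_fin[OF Ob] by (simp add: ennreal_mult_less_top)
    finally show ?thesis .
  next
    case False
    then have r: "0 < r" "r < 1" using assms(4) by auto
    define W where "W k = Omega C \<inter> {x. x - (1 / 2 ^ k) *\<^sub>R e \<notin> C}" for k :: nat
    have Wb: "W k \<in> sets borel" for k unfolding W_def using Ob W_borel[OF cC(3)] by auto
    have Ws: "W k \<in> sets sphere_measure" for k using Wb sets_sigma by blast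
    define t where "t k = (c * 2 ^ Suc k) powr r" for k :: nat
    define F where "F u = ennreal (c powr r) * indicator (Omega C) u + (\<Sum>k. ennreal (t k) * indicator (W k) u)" for u :: 'a
    have ptw: "ennreal (radial E u powr r) * indicator (Omega C) u \<le> F u" for u
    proof (cases "u \<in> Omega C")
      case False then show ?thesis by simp
    next
      case uO: True
      have r0: "radial E u \<ge> 0" using rad0[OF uO] .
      show ?thesis
      proof (cases "radial E u \<le> c")
        case True
        then have "radial E u powr r \<le> c powr r" using powr_mono2[of r "radial E u" c] r r0 by auto
        then have "ennreal (radial E u powr r) * indicator (Omega C) u \<le> ennreal (c powr r) * indicator (Omega C) u"
          using uO by (simp add: ennreal_leI)
        also have "\<dots> \<le> F u" unfolding F_def by simp
        finally show ?thesis .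
      next
        case False
        obtain h0 where h0: "h0 > 0" "u - h0 *\<^sub>R e \<in> C" using K2[OF uO] by blast
        obtain k0 :: nat where k0: "1 / h0 < 2 ^ k0" using real_arch_pow[of 2 "1 / h0"] by auto
        define P where "P k = (u - (1 / 2 ^ k) *\<^sub>R e \<in> C)" for k :: nat
        have Pk0: "P k0"
        proof -
          have lt: "1 / 2 ^ k0 < h0" using k0 h0 by (simp add: field_simps)
          have "(u - h0 *\<^sub>R e) + (h0 - 1 / 2 ^ k0) *\<^sub>R e \<in> C"
            using lt eC h0 by (intro cone_add[OF cC(1,2)] cone_scale[OF cC(1)]) auto
          then show ?thesis by (simp add: P_def algebra_simps)
        qed
        define k where "k = (LEAST k. P k)"
        have Pk: "P k" unfolding k_def using Pk0 by (rule LeastI)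
        have "k \<noteq> 0"
        proof
          assume "k = 0"
          then have "u - 1 *\<^sub>R e \<in> C" using Pk by (simp add: P_def)
          then have "radial E u \<le> c / 1" by (intro K1') auto
          then show False using False by simp
        qed
        then obtain j where kj: "k = Suc j" by (cases k) auto
        have nPj: "\<not> P j" unfolding k_def by (rule not_less_Least) (simp add: kj k_def[symmetric])
        have uW: "u \<in> W j" using nPj uO by (simp add: W_def P_def)
        have "radial E u \<le> c / (1 / 2 ^ k)" using Pk by (intro K1') (auto simp: P_def)
        then have "radial E u \<le> c * 2 ^ Suc j" by (simp add: kj)
        then have "radial E u powr r \<le> t j" unfolding t_def using powr_mono2[of r "radial E u"] r r0 by auto
        then have "ennreal (radial E u powr r) * indicator (Omega C) u \<le> ennreal (t j) * indicator (W j) u"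
          using uO uW by (simp add: ennreal_leI)
        also have "\<dots> \<le> (\<Sum>k. ennreal (t k) * indicator (W k) u)"
        proof -
          define f where "f k = ennreal (t k) * indicator (W k) u" for k
          have "sum f {j} \<le> suminf f" by (rule sum_le_suminf) auto
          then show ?thesis unfolding f_def[symmetric] by simp
        qed
        also have "\<dots> \<le> F u" unfolding F_def by simp
        finally show ?thesis .
      qed
    qed
    have "I \<le> integral\<^sup>N sphere_measure F" unfolding I_def by (rule nn_integral_mono) (rule ptw)
    also have "integral\<^sup>N sphere_measure F = ennreal (c powr r) * emeasure sphere_measure (Omega C)
       + (\<Sum>k. ennreal (t k) * emeasure sphere_measure (W k))"
    proof -
      have m1: "(\<lambda>u. ennreal a * indicator A u) \<in> borel_measurable (sphere_measure :: 'a measure)"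
        if "A \<in> sets sphere_measure" for a A
        using that by measurable
      have "integral\<^sup>N sphere_measure F = (\<integral>\<^sup>+ u. ennreal (c powr r) * indicator (Omega C) u \<partial>sphere_measure)
          + (\<integral>\<^sup>+ u. (\<Sum>k. ennreal (t k) * indicator (W k) u) \<partial>sphere_measure)"
        unfolding F_def using m1[OF Os] m1[OF Ws] by (intro nn_integral_add) auto
      also have "(\<integral>\<^sup>+ u. (\<Sum>k. ennreal (t k) * indicator (W k) u) \<partial>sphere_measure)
          = (\<Sum>k. (\<integral>\<^sup>+ u. ennreal (t k) * indicator (W k) u \<partial>sphere_measure))"
        using m1[OF Ws] by (intro nn_integral_suminf) auto
      finally show ?thesis using Os Ws by (simp add: nn_integral_cmult_indicator)
    qed
    also have "\<dots> < \<infinity>"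
    proof -
      define Vr where "Vr = measure lborel (ball (0::'a) (1 + norm e))"
      define n where "n = real DIM('a)"
      have sW: "emeasure sphere_measure (W k) \<le> ennreal (n * (Vr / real (2 ^ k)))" for k
      proof -
        define D where "D = {x \<in> ball 0 1 \<inter> C. x - (1 / 2 ^ k) *\<^sub>R e \<notin> C}"
        have Db: "D \<in> sets borel" unfolding D_def by (rule D_borel[OF cC(3)])
        have sub: "(\<lambda>x::'a. x /\<^sub>R norm x) -` W k \<inter> ball 0 1 \<subseteq> D"
        proof
          fix x :: 'a assume x: "x \<in> (\<lambda>x::'a. x /\<^sub>R norm x) -` W k \<inter> ball 0 1"
          let ?u = "x /\<^sub>R norm x"
          have uS: "norm ?u = 1" "?u \<in> C" "?u - (1 / 2 ^ k) *\<^sub>R e \<notin> C"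
            using x by (auto simp: W_def Omega_def interior_subset[THEN subsetD])
          have x0: "x \<noteq> 0" using uS(1) by auto
          have nx: "norm x < 1" "norm x > 0" using x x0 by auto
          have xC: "x \<in> C" using cone_scale[OF cC(1) uS(2), of "norm x"] x0 by simp
          have "x - (1 / 2 ^ k) *\<^sub>R e \<notin> C"
          proof
            assume a: "x - (1 / 2 ^ k) *\<^sub>R e \<in> C"
            have "(x - (1 / 2 ^ k) *\<^sub>R e) + ((1 - norm x) * (1 / 2 ^ k)) *\<^sub>R e \<in> C"
              using a eC nx by (intro cone_add[OF cC(1,2)] cone_scale[OF cC(1)]) auto
            then have "(1 / norm x) *\<^sub>R ((x - (1 / 2 ^ k) *\<^sub>R e) + ((1 - norm x) * (1 / 2 ^ k)) *\<^sub>R e) \<in> C"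
              using nx by (intro cone_scale[OF cC(1)]) auto
            moreover have "(1 / norm x) *\<^sub>R ((x - (1 / 2 ^ k) *\<^sub>R e) + ((1 - norm x) * (1 / 2 ^ k)) *\<^sub>R e)
                = ?u - (1 / 2 ^ k) *\<^sub>R e"
              using nx by (simp add: algebra_simps divide_inverse)
            ultimately show False using uS(3) by simp
          qed
          then show "x \<in> D" using x xC by (simp add: D_def)
        qed
        have "emeasure sphere_measure (W k) = ennreal n * emeasure lborel ((\<lambda>x::'a. x /\<^sub>R norm x) -` W k \<inter> ball 0 1)"
          unfolding n_def by (rule emeasure_sigma[OF Wb])
        also have "\<dots> \<le> ennreal n * emeasure lborel D"
          using sub Db by (intro mult_left_mono emeasure_mono) auto
        also have "\<dots> \<le> ennreal n * ennreal (Vr / real (2 ^ k))"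
          unfolding D_def Vr_def
          by (intro mult_left_mono D_bound_real[OF cC(1-3) eC]) auto
        also have "\<dots> = ennreal (n * (Vr / real (2 ^ k)))" by (subst ennreal_mult) (auto simp: n_def Vr_def)
        finally show ?thesis .
      qed
      have Vr0: "Vr \<ge> 0" by (simp add: Vr_def)
      have n0: "n \<ge> 0" by (simp add: n_def)
      define g where "g k = t k * (n * (Vr / real (2 ^ k)))" for k
      have g_eq: "g k = (n * Vr * c powr r * 2 powr r) * (2 powr (r - 1)) ^ k" for k
      proof -
        have "g k = n * Vr * ((c * 2 ^ Suc k) powr r / 2 ^ k)" by (simp add: g_def t_def)
        also have "\<dots> = (n * Vr * c powr r * 2 powr r) * (2 powr (r - 1)) ^ k"
          by (subst geo_identity[OF c0]) (simp only: mult.assoc)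
        finally show ?thesis .
      qed
      have "(2::real) powr (r - 1) < 2 powr 0" using r by (intro powr_less_mono) auto
      then have q: "norm ((2::real) powr (r - 1)) < 1" by simp
      have sg: "summable g" unfolding g_eq by (intro summable_mult summable_geometric q)
      have g0: "g k \<ge> 0" for k using Vr0 n0 by (simp add: g_def t_def)
      have "ennreal (c powr r) * emeasure sphere_measure (Omega C) < \<infinity>"
        using sigma_fin[OF Ob] by (simp add: ennreal_mult_less_top)
      moreover have "(\<Sum>k. ennreal (t k) * emeasure sphere_measure (W k)) \<le> (\<Sum>k. ennreal (g k))"
      proof (intro suminf_le summableI)
        fix k
        have "ennreal (t k) * emeasure sphere_measure (W k) \<le> ennreal (t k) * ennreal (n * (Vr / real (2 ^ k)))"
          by (intro mult_left_mono sW) auto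
        also have "\<dots> = ennreal (g k)" unfolding g_def
          by (rule ennreal_mult[symmetric]) (use Vr0 n0 in \<open>auto simp: t_def\<close>)
        finally show "ennreal (t k) * emeasure sphere_measure (W k) \<le> ennreal (g k)" .
      qed
      moreover have "(\<Sum>k. ennreal (g k)) < \<infinity>"
        using ennreal_suminf_neq_top[OF sg g0] by (simp add: top.not_eq_extremum)
      ultimately show ?thesis by (simp add: ennreal_add_less_top order_le_less_trans)
    qed
    finally show ?thesis .
  qed
  then show ?thesis unfolding dual_volume_def I_def[symmetric] by (simp add: ennreal_mult_less_top)
qed

end
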